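(* Let $\rho>1$. There exist a constant $D_0>0$ and an integer $N$, depending only on $T$ and $\rho$, such that for every $k$ and every pair of admissible $(k+1)$-words $w_1,w_2$ with $d_1\ge N$ and $d_2\ge N$, one has $|p_{11}(t)p_{22}(t)-p_{12}(t)p_{21}(t)|\ge D_0|t|^{d_1+d_2}$ for all complex $t$ with $|t|\ge\rho$.
   Context: Let $\mathcal{A}$ be a finite alphabet of $r$ symbols and $T=(T_{x,y})$ an irreducible $r\times r$ matrix with entries in $\{0,1\}$ (the directed graph on $\mathcal{A}$ with an edge $x\to y$ iff $T_{y,x}=1$ is strongly connected). An admissible $k$-word is a string $a_1\cdots a_k$ with $T_{a_{i+1},a_i}=1$ for all $i$. $V_k$ is the complex vector space with basis $\{[w]\}$ indexed by admissible $k$-words; $\psi_k:V_1\to V_k$ is linear with $\psi_k([a])$ the sum of $[w]$ over admissible $k$-words beginning with $a$; $T_k:V_k\to V_k$ is linear with $T_k([a_1\cdots a_k])=\sum[a_2\cdots a_kx]$ over symbols $x$ with $a_2\cdots a_kx$ admissible. For an admissible $k$-word $u=u_1\cdots u_k$, $h(u)$ is the least non-negative integer $h$ such that $u$ is the only admissible $k$-word beginning with $u_1\cdots u_{h+1}$. For admissible $(k+1)$-words $w_1=a_0\cdots a_k$, $w_2=b_0\cdots b_k$: $d_1=h(a_1\cdots a_k)$; $W$ is the span of $\psi_k(V_1)$ and $T_k^i[a_1\cdots a_k]$, $0\le i\le d_1-1$; $d_2$ is the least non-negative integer with $T_k^{d_2}[b_1\cdots b_k]\in W$. Correlation coefficients: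 for $0\le i\le d_1$, $c^{11}_{d_1-i}=1$ if $a_0\cdots a_{k-i}=a_i\cdots a_k$, $c^{21}_{d_1-i}=1$ if $b_0\cdots b_{k-i}=a_i\cdots a_k$; for $0\le j\le d_2$, $c^{12}_{d_2-j}=1$ if $a_0\cdots a_{k-j}=b_j\cdots b_k$, $c^{22}_{d_2-j}=1$ if $b_0\cdots b_{k-j}=b_j\cdots b_k$; all are $0$ otherwise. Correlation polynomials: $p_{11}(t)=\sum_{i=0}^{d_1}c^{11}_{d_1-i}t^{d_1-i}$, $p_{21}(t)=\sum_{i=1}^{d_1}c^{21}_{d_1-i}t^{d_1-i}$, $p_{12}(t)=\sum_{j=1}^{d_2}c^{12}_{d_2-j}t^{d_2-j}$, $p_{22}(t)=\sum_{j=0}^{d_2}c^{22}_{d_2-j}t^{d_2-j}$. *)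

theory Defs
  imports Complex_Main
begin

text \<open>Alphabet: a finite type 'a. The 0-1 matrix is T :: 'a => 'a => bool,
  with T y x meaning T_{y,x} = 1, i.e. an edge x -> y.\<close>

definition irreducible01 :: "('a \<Rightarrow> 'a \<Rightarrow> bool) \<Rightarrow> bool" where
  "irreducible01 T \<longleftrightarrow> (\<forall>x y. (x, y) \<in> {(x, y). T y x}\<^sup>*)"

definition admissible :: "('a \<Rightarrow> 'a \<Rightarrow> bool) \<Rightarrow> 'a list \<Rightarrow> bool" where
  "admissible T w \<longleftrightarrow> (\<forall>i. i + 1 < length w \<longrightarrow> T (w ! (i + 1)) (w ! i))"

definition adm_words :: "('a \<Rightarrow> 'a \<Rightarrow> bool) \<Rightarrow> nat \<Rightarrow> 'a list set" where
  "adm_words T k = {w. length w = k \<and> admissible T w}"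

text \<open>Vectors of V_k are represented as complex-valued functions on words
  (supported on admissible k-words); [w] is the indicator of w.\<close>
definition basis_vec :: "'a list \<Rightarrow> ('a list \<Rightarrow> complex)" where
  "basis_vec w = (\<lambda>u. if u = w then 1 else 0)"

definition psi :: "('a \<Rightarrow> 'a \<Rightarrow> bool) \<Rightarrow> nat \<Rightarrow> 'a \<Rightarrow> ('a list \<Rightarrow> complex)" where
  "psi T k a = (\<lambda>u. if u \<in> adm_words T k \<and> hd u = a then 1 else 0)"

text \<open>T_k [a_1...a_k] = sum of [a_2...a_k x] over admissible a_2...a_k x, extended linearly.\<close>
definition Tk :: "('a \<Rightarrow> 'a \<Rightarrow> bool) \<Rightarrow> nat \<Rightarrow> ('a list \<Rightarrow> complex) \<Rightarrow> ('a list \<Rightarrow> complex)" where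
  "Tk T k v = (\<lambda>u. if u \<in> adm_words T k
       then (\<Sum>w\<in>{w \<in> adm_words T k. tl w = butlast u}. v w) else 0)"

definition hh :: "('a \<Rightarrow> 'a \<Rightarrow> bool) \<Rightarrow> 'a list \<Rightarrow> nat" where
  "hh T u = (LEAST h. \<forall>v \<in> adm_words T (length u). take (h + 1) v = take (h + 1) u \<longrightarrow> v = u)"

definition Wspace :: "('a::finite \<Rightarrow> 'a \<Rightarrow> bool) \<Rightarrow> nat \<Rightarrow> 'a list \<Rightarrow> nat \<Rightarrow> ('a list \<Rightarrow> complex) set" where
  "Wspace T k u d1 = {v. \<exists>(c :: 'a \<Rightarrow> complex) (e :: nat \<Rightarrow> complex).
      v = (\<lambda>x. (\<Sum>a\<in>UNIV. c a * psi T k a x) + (\<Sum>i<d1. e i * (Tk T k ^^ i) (basis_vec u) x))}"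

definition d1 :: "('a::finite \<Rightarrow> 'a \<Rightarrow> bool) \<Rightarrow> 'a list \<Rightarrow> nat" where
  "d1 T w1 = hh T (tl w1)"

definition d2 :: "('a::finite \<Rightarrow> 'a \<Rightarrow> bool) \<Rightarrow> 'a list \<Rightarrow> 'a list \<Rightarrow> nat" where
  "d2 T w1 w2 = (LEAST d. (Tk T (length w1 - 1) ^^ d) (basis_vec (tl w2))
                      \<in> Wspace T (length w1 - 1) (tl w1) (d1 T w1))"

definition corr :: "'a list \<Rightarrow> 'a list \<Rightarrow> nat \<Rightarrow> bool" where
  "corr x y i \<longleftrightarrow> take (length x - i) x = drop i y"

definition p11 :: "('a::finite \<Rightarrow> 'a \<Rightarrow> bool) \<Rightarrow> 'a list \<Rightarrow> 'a list \<Rightarrow> complex \<Rightarrow> complex" where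
  "p11 T w1 w2 t = (\<Sum>i\<in>{0..d1 T w1}. (if corr w1 w1 i then 1 else 0) * t ^ (d1 T w1 - i))"

definition p21 :: "('a::finite \<Rightarrow> 'a \<Rightarrow> bool) \<Rightarrow> 'a list \<Rightarrow> 'a list \<Rightarrow> complex \<Rightarrow> complex" where
  "p21 T w1 w2 t = (\<Sum>i\<in>{1..d1 T w1}. (if corr w2 w1 i then 1 else 0) * t ^ (d1 T w1 - i))"

definition p12 :: "('a::finite \<Rightarrow> 'a \<Rightarrow> bool) \<Rightarrow> 'a list \<Rightarrow> 'a list \<Rightarrow> complex \<Rightarrow> complex" where
  "p12 T w1 w2 t = (\<Sum>j\<in>{1..d2 T w1 w2}. (if corr w1 w2 j then 1 else 0) * t ^ (d2 T w1 w2 - j))"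

definition p22 :: "('a::finite \<Rightarrow> 'a \<Rightarrow> bool) \<Rightarrow> 'a list \<Rightarrow> 'a list \<Rightarrow> complex \<Rightarrow> complex" where
  "p22 T w1 w2 t = (\<Sum>j\<in>{0..d2 T w1 w2}. (if corr w2 w2 j then 1 else 0) * t ^ (d2 T w1 w2 - j))"

end

theory Submission
  imports Defs
begin


definition ov :: "'a list \<Rightarrow> 'a list \<Rightarrow> nat \<Rightarrow> bool" where
  "ov x y i \<longleftrightarrow> (\<forall>z. z + i < length y \<longrightarrow> x ! z = y ! (i + z))"

definition per :: "'a list \<Rightarrow> nat \<Rightarrow> bool" where
  "per w p \<longleftrightarrow> (\<forall>z. z + p < length w \<longrightarrow> w ! z = w ! (z + p))"

lemma corr_ov:
  assumes "length x = length y"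
  shows "corr x y i \<longleftrightarrow> ov x y i"
proof (cases "i \<le> length y")
  case True
  show ?thesis unfolding corr_def ov_def
  proof
    assume h: "take (length x - i) x = drop i y"
    show "\<forall>z. z + i < length y \<longrightarrow> x ! z = y ! (i + z)"
    proof (intro allI impI)
      fix z assume z: "z + i < length y"
      have "take (length x - i) x ! z = drop i y ! z" using h by simp
      thus "x ! z = y ! (i + z)" using z assms by simp
    qed
  next
    assume h: "\<forall>z. z + i < length y \<longrightarrow> x ! z = y ! (i + z)"
    show "take (length x - i) x = drop i y"
      by (rule nth_equalityI) (use h assms True in \<open>auto simp: add.commute\<close>)
  qed
next
  case False
  thus ?thesis unfolding corr_def ov_def using assms by auto
qed

lemma per_ov: "per w p \<longleftrightarrow> ov w w p"
  unfolding per_def ov_def by (auto simp: add.commute)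

lemma per_0[simp]: "per w 0" unfolding per_def by auto

lemma per_len: "per w (length w)" unfolding per_def by auto

lemma per_sub:
  assumes "per w p" "per w q" "p \<le> q" "p + q \<le> length w"
  shows "per w (q - p)"
  unfolding per_def
proof (intro allI impI)
  fix z assume z: "z + (q - p) < length w"
  show "w ! z = w ! (z + (q - p))"
  proof (cases "z + q < length w")
    case True
    have "w ! z = w ! (z + q)" using assms(2) True unfolding per_def by auto
    moreover have "w ! (z + q - p) = w ! (z + q - p + p)"
      using assms(1) True assms(3) unfolding per_def by auto
    ultimately show ?thesis using assms(3) by (simp add: add_diff_eq)
  next
    case False
    hence zp: "z \<ge> p" using assms by linarith
    have "w ! (z - p) = w ! (z - p + p)" using assms(1) zp z assms(3) unfolding per_def by auto
    moreover have "w ! (z - p) = w ! (z - p + q)" using assms(2) zp z assms(3) unfolding per_def by auto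
    ultimately show ?thesis using zp assms(3) by (simp add: add_diff_eq)
  qed
qed

lemma fine_wilf:
  "per w p \<Longrightarrow> per w q \<Longrightarrow> p + q \<le> length w \<Longrightarrow> per w (gcd p q)"
proof (induction "p + q" arbitrary: p q rule: less_induct)
  case less
  show ?case
  proof (cases "p = 0 \<or> q = 0")
    case True thus ?thesis using less.prems by auto
  next
    case False
    show ?thesis
    proof (cases "p \<le> q")
      case True
      have "per w (q - p)" using per_sub less.prems True by blast
      moreover have "p + (q - p) < p + q" using False True by auto
      moreover have "p + (q - p) \<le> length w" using less.prems True by auto
      ultimately have "per w (gcd p (q - p))" using less.hyps less.prems(1) by blast
      moreover have "gcd p (q - p) = gcd p q"
        using gcd_diff1_nat[OF True] by (simp add: gcd.commute)
      ultimately show ?thesis by simp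
    next
      case F2: False
      hence le: "q \<le> p" by simp
      have "per w (p - q)" using per_sub less.prems le by (metis add.commute)
      moreover have "q + (p - q) < p + q" using False le by auto
      moreover have "q + (p - q) \<le> length w" using less.prems le by auto
      ultimately have "per w (gcd q (p - q))" using less.hyps less.prems(2) by blast
      moreover have "gcd q (p - q) = gcd p q"
        using gcd_diff1_nat[OF le] by (simp add: gcd.commute)
      ultimately show ?thesis by simp
    qed
  qed
qed

lemma per_mult: "per w p \<Longrightarrow> per w (m * p)"
proof (induction m)
  case 0 thus ?case by simp
next
  case (Suc m)
  show ?case unfolding per_def
  proof (intro allI impI)
    fix z assume z: "z + Suc m * p < length w"
    have "w ! z = w ! (z + p)" using Suc.prems z unfolding per_def by auto
    also have "\<dots> = w ! (z + p + m * p)" using Suc z unfolding per_def by (auto simp: add.assoc)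
    finally show "w ! z = w ! (z + Suc m * p)" by (simp add: add.assoc)
  qed
qed

lemma per_dvd: "per w p \<Longrightarrow> p dvd q \<Longrightarrow> per w q"
  using per_mult by (metis dvd_def mult.commute)

lemma per_char:
  assumes "2 * L \<le> length w" "q < L" "p = (LEAST p. 0 < p \<and> per w p)"
  shows "per w q \<longleftrightarrow> p dvd q"
proof -
  have ex: "0 < length w \<and> per w (length w)" using assms per_len by auto
  hence pp: "0 < p" "per w p" using LeastI_ex[of "\<lambda>p. 0 < p \<and> per w p"] assms(3) by blast+
  show ?thesis
  proof
    assume q: "per w q"
    show "p dvd q"
    proof (cases "q = 0")
      case True thus ?thesis by simp
    next
      case False
      have pq: "p \<le> q" using Least_le[of "\<lambda>p. 0 < p \<and> per w p" q] q False assms(3) by auto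
      hence "per w (gcd p q)" using fine_wilf[OF pp(2) q] assms by auto
      moreover have "0 < gcd p q" using pp by auto
      ultimately have "p \<le> gcd p q" using Least_le[of "\<lambda>p. 0 < p \<and> per w p"] assms(3) by auto
      moreover have "gcd p q \<le> p" using pp by (simp add: gcd_le1_nat)
      ultimately have "gcd p q = p" by simp
      thus ?thesis by (metis gcd_dvd2)
    qed
  next
    assume "p dvd q" thus "per w q" using per_dvd pp by blast
  qed
qed

lemma cross_per:
  assumes "length w1 = length w2" "ov w2 w1 i" "ov w1 w2 j"
  shows "per w1 (i + j)"
  unfolding per_def
proof (intro allI impI)
  fix z assume z: "z + (i + j) < length w1"
  have "w1 ! z = w2 ! (j + z)" using assms(3) z assms(1) unfolding ov_def by auto
  also have "\<dots> = w1 ! (i + (j + z))" using assms(2) z unfolding ov_def by auto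
  finally show "w1 ! z = w1 ! (z + (i + j))" by (simp add: add_ac)
qed

lemma ov_shift1:
  assumes "ov w2 w1 i" "per w1 p"
  shows "ov w2 w1 (i + p)"
  unfolding ov_def
proof (intro allI impI)
  fix z assume z: "z + (i + p) < length w1"
  have "w2 ! z = w1 ! (i + z)" using assms(1) z unfolding ov_def by auto
  also have "\<dots> = w1 ! (i + z + p)" using assms(2) z unfolding per_def by auto
  finally show "w2 ! z = w1 ! (i + p + z)" by (simp add: add_ac)
qed

lemma ov_shift_mult:
  assumes "ov w2 w1 i" "per w1 p"
  shows "ov w2 w1 (i + m * p)"
  using per_mult[OF assms(2), of m] ov_shift1[OF assms(1)] by blast

lemma ov_shift2:
  assumes "length w1 = length w2" "ov w2 w1 i" "per w2 p"
  shows "ov w2 w1 (i + p)"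
  unfolding ov_def
proof (intro allI impI)
  fix z assume z: "z + (i + p) < length w1"
  have "w1 ! (i + p + z) = w1 ! (i + (p + z))" by (simp add: add_ac)
  also have "\<dots> = w2 ! (p + z)" using assms(2) z unfolding ov_def by (auto simp: add_ac)
  also have "\<dots> = w2 ! z" using assms(3) z assms(1) unfolding per_def by (auto simp: add_ac)
  finally show "w2 ! z = w1 ! (i + p + z)" by simp
qed

lemma cross_struct:
  assumes len: "length w1 = n" "length w2 = n" "8 * M \<le> n"
    and i0: "i0 = (LEAST i. 1 \<le> i \<and> ov w2 w1 i)" "1 \<le> ia" "ia < M" "ov w2 w1 ia"
    and j0: "j0 = (LEAST j. 1 \<le> j \<and> ov w1 w2 j)" "1 \<le> ja" "ja < M" "ov w1 w2 ja"
    and p1: "p1 = (LEAST p. 0 < p \<and> per w1 p)" and p2: "p2 = (LEAST p. 0 < p \<and> per w2 p)"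
  shows "p1 = p2" "p1 dvd (i0 + j0)" "1 \<le> i0" "1 \<le> j0" "0 < p1"
    "\<forall>i<M. (1 \<le> i \<and> ov w2 w1 i) \<longleftrightarrow> (i0 \<le> i \<and> p1 dvd (i - i0))"
proof -
  have I: "1 \<le> i0 \<and> ov w2 w1 i0" using i0 LeastI[of "\<lambda>i. 1 \<le> i \<and> ov w2 w1 i" ia] by auto
  have Ile: "i0 \<le> ia" using i0 Least_le[of "\<lambda>i. 1 \<le> i \<and> ov w2 w1 i" ia] by auto
  have J: "1 \<le> j0 \<and> ov w1 w2 j0" using j0 LeastI[of "\<lambda>i. 1 \<le> i \<and> ov w1 w2 i" ja] by auto
  have Jle: "j0 \<le> ja" using j0 Least_le[of "\<lambda>i. 1 \<le> i \<and> ov w1 w2 i" ja] by auto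
  have c1: "\<forall>q<4*M. per w1 q \<longleftrightarrow> p1 dvd q" using per_char[of "4*M" w1 _ p1] len p1 by auto
  have c2: "\<forall>q<4*M. per w2 q \<longleftrightarrow> p2 dvd q" using per_char[of "4*M" w2 _ p2] len p2 by auto
  have ex1: "0 < length w1 \<and> per w1 (length w1)" using len i0 per_len by auto
  have pp1: "0 < p1" using LeastI_ex[of "\<lambda>p. 0 < p \<and> per w1 p"] ex1 p1 by blast
  have ex2: "0 < length w2 \<and> per w2 (length w2)" using len i0 per_len[of w2] by auto
  have pp2: "0 < p2" "per w2 p2" using LeastI_ex[of "\<lambda>p. 0 < p \<and> per w2 p"] ex2 p2 by blast+
  have pp1': "per w1 p1" using LeastI_ex[of "\<lambda>p. 0 < p \<and> per w1 p"] ex1 p1 by blast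
  have s1: "per w1 (i0 + j0)" using cross_per[of w1 w2 i0 j0] I J len by auto
  have s2: "per w2 (j0 + i0)" using cross_per[of w2 w1 j0 i0] I J len by auto
  have d1: "p1 dvd (i0 + j0)" using c1 s1 Ile Jle i0 j0 by auto
  have d2: "p2 dvd (i0 + j0)" using c2 s2 Ile Jle i0 j0 by (auto simp: add.commute)
  have "p2 \<le> i0 + j0" using d2 I by (auto intro: dvd_imp_le)
  have "ov w2 w1 (i0 + p2)" using ov_shift2[of w1 w2 i0 p2] len I pp2 by auto
  hence "per w1 (i0 + p2 + j0)" using cross_per[of w1 w2 "i0 + p2" j0] J len by auto
  hence "p1 dvd (i0 + j0 + p2)" using c1 \<open>p2 \<le> i0 + j0\<close> Ile Jle i0 j0 by (auto simp: add_ac)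
  hence dd1: "p1 dvd p2" using d1 by (simp add: dvd_add_right_iff)
  have "p1 \<le> i0 + j0" using d1 I by (auto intro: dvd_imp_le)
  have "ov w1 w2 (j0 + p1)" using ov_shift2[of w2 w1 j0 p1] len J pp1' by auto
  hence "per w2 (j0 + p1 + i0)" using cross_per[of w2 w1 "j0 + p1" i0] I len by auto
  hence "p2 dvd (i0 + j0 + p1)" using c2 \<open>p1 \<le> i0 + j0\<close> Ile Jle i0 j0 by (auto simp: add_ac)
  hence dd2: "p2 dvd p1" using d2 by (simp add: dvd_add_right_iff)
  show "p1 = p2" using dd1 dd2 by (rule dvd_antisym)
  show "p1 dvd (i0 + j0)" by (rule d1)
  show "1 \<le> i0" "1 \<le> j0" "0 < p1" using I J pp1 by auto
  show "\<forall>i<M. (1 \<le> i \<and> ov w2 w1 i) \<longleftrightarrow> (i0 \<le> i \<and> p1 dvd (i - i0))"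
  proof (intro allI impI iffI)
    fix i assume iM: "i < M" and h: "1 \<le> i \<and> ov w2 w1 i"
    have le: "i0 \<le> i" using i0 Least_le[of "\<lambda>i. 1 \<le> i \<and> ov w2 w1 i" i] h by auto
    have "per w1 (i + j0)" using cross_per[of w1 w2 i j0] h J len by auto
    hence "p1 dvd (i + j0)" using c1 iM Jle j0 by auto
    hence "p1 dvd (i + j0) - (i0 + j0)" using d1 by (rule dvd_diff_nat)
    thus "i0 \<le> i \<and> p1 dvd (i - i0)" using le by simp
  next
    fix i assume iM: "i < M" and h: "i0 \<le> i \<and> p1 dvd (i - i0)"
    then obtain m where m: "i - i0 = p1 * m" by (auto elim: dvdE)
    have "ov w2 w1 (i0 + m * p1)" using ov_shift_mult[of w2 w1 i0 p1 m] I pp1' by auto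
    moreover have "i0 + m * p1 = i" using m h by (simp add: mult.commute)
    ultimately show "1 \<le> i \<and> ov w2 w1 i" using I h by auto
  qed
qed



definition cf :: "(nat \<Rightarrow> bool) \<Rightarrow> complex \<Rightarrow> nat \<Rightarrow> complex" where
  "cf c s i = (if c i then 1 else 0) * s ^ i"

definition Sf :: "(nat \<Rightarrow> bool) \<Rightarrow> nat \<Rightarrow> complex \<Rightarrow> complex" where
  "Sf c d s = (\<Sum>i\<in>{0..d}. cf c s i)"

definition Si :: "(nat \<Rightarrow> bool) \<Rightarrow> complex \<Rightarrow> complex" where
  "Si c s = suminf (cf c s)"

lemma cf_norm: assumes "norm s \<le> r" shows "norm (cf c s i) \<le> r ^ i"
proof -
  have r0: "0 \<le> r" using assms norm_ge_zero order_trans by blast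
  show ?thesis unfolding cf_def using assms r0 by (auto simp: norm_power intro: power_mono)
qed

lemma summable_cf:
  assumes "norm s \<le> r" "r < 1"
  shows "summable (\<lambda>i. norm (cf c s i))" "summable (cf c s)"
proof -
  have r0: "0 \<le> r" using assms norm_ge_zero order_trans by blast
  have g: "summable (\<lambda>i. r ^ i)" using assms r0 by (simp add: summable_geometric)
  show "summable (\<lambda>i. norm (cf c s i))"
    by (rule summable_comparison_test'[OF g]) (use cf_norm[OF assms(1)] in auto)
  thus "summable (cf c s)" by (rule summable_norm_cancel)
qed

lemma geo_bound:
  fixes r :: real
  assumes "0 \<le> r" "r < 1" "finite I"
  shows "(\<Sum>i\<in>I. r ^ i) \<le> 1 / (1 - r)"
proof -
  have "(\<Sum>i\<in>I. r ^ i) \<le> (\<Sum>i. r ^ i)"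
    by (rule sum_le_suminf) (use assms in \<open>auto simp: summable_geometric\<close>)
  also have "\<dots> = 1 / (1 - r)" using assms by (simp add: suminf_geometric)
  finally show ?thesis .
qed

lemma Sf_bound:
  assumes "norm s \<le> r" "r < 1"
  shows "norm (Sf c d s) \<le> 1 / (1 - r)"
proof -
  have r0: "0 \<le> r" using assms norm_ge_zero order_trans by blast
  have "norm (Sf c d s) \<le> (\<Sum>i\<in>{0..d}. norm (cf c s i))" unfolding Sf_def by (rule norm_sum)
  also have "\<dots> \<le> (\<Sum>i\<in>{0..d}. r ^ i)" by (rule sum_mono) (rule cf_norm[OF assms(1)])
  also have "\<dots> \<le> 1 / (1 - r)" using geo_bound r0 assms by auto
  finally show ?thesis .
qed

lemma tail_bound:
  fixes f :: "nat \<Rightarrow> complex"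
  assumes "norm s \<le> r" "r < 1" "\<forall>i<m. f i = 0" "\<forall>i. norm (f i) \<le> r ^ i"
  shows "norm (suminf f) \<le> r ^ m / (1 - r)"
proof -
  have r0: "0 \<le> r" using assms norm_ge_zero order_trans by blast
  have g: "summable (\<lambda>i. r ^ i)" using assms r0 by (simp add: summable_geometric)
  have sn: "summable (\<lambda>i. norm (f i))"
    by (rule summable_comparison_test'[OF g]) (use assms in auto)
  have s: "summable f" using sn by (rule summable_norm_cancel)
  have "suminf f = (\<Sum>n. f (n + m)) + (\<Sum>i<m. f i)" using s by (rule suminf_split_initial_segment)
  hence e: "suminf f = (\<Sum>n. f (n + m))" using assms by simp
  have sn2: "summable (\<lambda>n. norm (f (n + m)))" using sn by (rule summable_ignore_initial_segment)
  have g2: "summable (\<lambda>n. r ^ m * r ^ n)" using g by (rule summable_mult)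
  have "norm (\<Sum>n. f (n + m)) \<le> (\<Sum>n. norm (f (n + m)))" using sn2 by (rule summable_norm)
  also have "\<dots> \<le> (\<Sum>n. r ^ m * r ^ n)"
  proof (rule suminf_le)
    fix n show "norm (f (n + m)) \<le> r ^ m * r ^ n"
      using assms(4) by (metis power_add mult.commute)
  qed (use sn2 g2 in auto)
  also have "\<dots> = r ^ m * (1 / (1 - r))" using g assms r0 by (simp add: suminf_mult suminf_geometric)
  finally show ?thesis using e by simp
qed

lemma Sf_Si:
  assumes "norm s \<le> r" "r < 1"
  shows "norm (Sf c d s - Si c s) \<le> r ^ (d + 1) / (1 - r)"
proof -
  have s: "summable (cf c s)" using summable_cf[OF assms] by blast
  have "Si c s = (\<Sum>n. cf c s (n + Suc d)) + (\<Sum>i<Suc d. cf c s i)"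
    unfolding Si_def using s by (rule suminf_split_initial_segment)
  moreover have "Sf c d s = (\<Sum>i<Suc d. cf c s i)" unfolding Sf_def
    by (simp add: atLeast0AtMost lessThan_Suc_atMost)
  ultimately have "Sf c d s - Si c s = - (\<Sum>n. cf c s (n + Suc d))" by simp
  hence "norm (Sf c d s - Si c s) = norm (\<Sum>n. cf c s (n + Suc d))" by simp
  also have "(\<Sum>n. cf c s (n + Suc d)) = suminf (\<lambda>i. if i < Suc d then 0 else cf c s i) "
  proof -
    have ss: "summable (\<lambda>i. if i < Suc d then 0 else cf c s i)"
      by (rule summable_comparison_test'[OF summable_cf(1)[OF assms, of c]]) auto
    have "suminf (\<lambda>i. if i < Suc d then 0 else cf c s i)
        = (\<Sum>n. (\<lambda>i. if i < Suc d then 0 else cf c s i) (n + Suc d)) + (\<Sum>i<Suc d. (\<lambda>i. if i < Suc d then 0 else cf c s i) i)"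
      using ss by (rule suminf_split_initial_segment)
    thus ?thesis by simp
  qed
  also have "norm \<dots> \<le> r ^ Suc d / (1 - r)"
  proof (rule tail_bound[OF assms])
    have r0: "0 \<le> r" using assms norm_ge_zero order_trans by blast
    show "\<forall>i<Suc d. (if i < Suc d then 0 else cf c s i) = 0" by simp
    show "\<forall>i. norm (if i < Suc d then 0 else cf c s i) \<le> r ^ i"
      using cf_norm[OF assms(1)] r0 by simp
  qed
  finally show ?thesis by simp
qed

lemma Sf_diff:
  assumes "norm s \<le> r" "r < 1" "\<forall>i<M. c i = c' i"
  shows "norm (Sf c d s - Sf c' d s) \<le> r ^ M / (1 - r)"
proof -
  define f where "f i = (if i \<le> d then cf c s i - cf c' s i else 0)" for i
  have r0: "0 \<le> r" using assms norm_ge_zero order_trans by blast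
  have fb: "\<forall>i. norm (f i) \<le> r ^ i"
    unfolding f_def cf_def using assms(1) r0 by (auto simp: norm_power intro: power_mono)
  have f0: "\<forall>i<M. f i = 0" using assms(3) unfolding f_def cf_def by auto
  have fz: "\<And>i. i \<notin> {0..d} \<Longrightarrow> f i = 0" unfolding f_def by auto
  have "f sums (\<Sum>i\<in>{0..d}. f i)" by (rule sums_finite) (use fz in auto)
  hence "suminf f = (\<Sum>i\<in>{0..d}. f i)" by (rule sums_unique[symmetric])
  also have "\<dots> = Sf c d s - Sf c' d s" unfolding f_def Sf_def by (simp add: sum_subtractf)
  finally have "Sf c d s - Sf c' d s = suminf f" by simp
  thus ?thesis using tail_bound[OF assms(1,2) f0 fb] by simp
qed

lemma approx:
  assumes "norm s \<le> r" "r < 1" "\<forall>i<M. c i = c' i" "M \<le> d"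
  shows "norm (Sf c d s - Si c' s) \<le> 2 * r ^ M / (1 - r)"
proof -
  have r0: "0 \<le> r" using assms norm_ge_zero order_trans by blast
  have "norm (Sf c d s - Si c' s) \<le> norm (Sf c d s - Sf c' d s) + norm (Sf c' d s - Si c' s)"
    using norm_triangle_ineq[of "Sf c d s - Sf c' d s" "Sf c' d s - Si c' s"] by simp
  also have "\<dots> \<le> r ^ M / (1 - r) + r ^ (d + 1) / (1 - r)"
    using Sf_diff[OF assms(1-3)] Sf_Si[OF assms(1,2)] by (rule add_mono)
  also have "r ^ (d + 1) \<le> r ^ M" using power_decreasing[of M "d+1" r] assms r0 by auto
  hence "r ^ M / (1 - r) + r ^ (d + 1) / (1 - r) \<le> 2 * r ^ M / (1 - r)"
    using assms unfolding add_divide_distrib[symmetric] by (intro divide_right_mono) auto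
  finally show ?thesis .
qed

lemma Si_dvd:
  fixes s :: complex
  assumes "0 < p" "norm s < 1"
  shows "Si (\<lambda>i. p dvd i) s = 1 / (1 - s ^ p)"
proof -
  have sm: "strict_mono (\<lambda>m. p * m)" using assms by (auto simp: strict_mono_def)
  have z: "\<And>n. n \<notin> range (\<lambda>m. p * m) \<Longrightarrow> cf (\<lambda>i. p dvd i) s n = 0"
    unfolding cf_def by (auto elim!: dvdE)
  have ns: "norm (s ^ p) < 1" using assms by (simp add: norm_power power_less_one_iff)
  have "(\<lambda>m. cf (\<lambda>i. p dvd i) s (p * m)) = (\<lambda>m. (s ^ p) ^ m)"
    unfolding cf_def by (simp add: power_mult)
  hence "(\<lambda>m. cf (\<lambda>i. p dvd i) s (p * m)) sums (1 / (1 - s ^ p))"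
    using geometric_sums[OF ns] by simp
  hence "cf (\<lambda>i. p dvd i) s sums (1 / (1 - s ^ p))"
    using sums_mono_reindex[of "\<lambda>m. p * m" "cf (\<lambda>i. p dvd i) s" "1 / (1 - s ^ p)"] sm z by blast
  thus ?thesis unfolding Si_def by (rule sums_unique[symmetric])
qed

lemma Si_shift:
  fixes s :: complex
  assumes "0 < p" "norm s < 1"
  shows "Si (\<lambda>i. i0 \<le> i \<and> p dvd (i - i0)) s = s ^ i0 / (1 - s ^ p)"
proof -
  have sm: "strict_mono (\<lambda>m. i0 + p * m)" using assms by (auto simp: strict_mono_def)
  have z: "\<And>n. n \<notin> range (\<lambda>m. i0 + p * m) \<Longrightarrow> cf (\<lambda>i. i0 \<le> i \<and> p dvd (i - i0)) s n = 0"
  proof -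
    fix n assume n: "n \<notin> range (\<lambda>m. i0 + p * m)"
    show "cf (\<lambda>i. i0 \<le> i \<and> p dvd (i - i0)) s n = 0"
    proof (cases "i0 \<le> n \<and> p dvd (n - i0)")
      case True
      then obtain m where "n - i0 = p * m" by (auto elim: dvdE)
      hence "n = i0 + p * m" using True by simp
      thus ?thesis using n by auto
    qed (auto simp add: cf_def)
  qed
  have ns: "norm (s ^ p) < 1" using assms by (simp add: norm_power power_less_one_iff)
  have "(\<lambda>m. cf (\<lambda>i. i0 \<le> i \<and> p dvd (i - i0)) s (i0 + p * m)) = (\<lambda>m. s ^ i0 * (s ^ p) ^ m)"
    unfolding cf_def by (simp add: power_mult power_add)
  moreover have "(\<lambda>m. s ^ i0 * (s ^ p) ^ m) sums (s ^ i0 * (1 / (1 - s ^ p)))"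
    using geometric_sums[OF ns] by (rule sums_mult)
  ultimately have "(\<lambda>m. cf (\<lambda>i. i0 \<le> i \<and> p dvd (i - i0)) s (i0 + p * m)) sums (s ^ i0 / (1 - s ^ p))"
    by simp
  hence "cf (\<lambda>i. i0 \<le> i \<and> p dvd (i - i0)) s sums (s ^ i0 / (1 - s ^ p))"
    using sums_mono_reindex[of "\<lambda>m. i0 + p * m" "cf (\<lambda>i. i0 \<le> i \<and> p dvd (i - i0)) s" "s ^ i0 / (1 - s ^ p)"] sm z by blast
  thus ?thesis unfolding Si_def by (rule sums_unique[symmetric])
qed

lemma Si_False: "Si (\<lambda>i. False) s = 0"
  unfolding Si_def cf_def by simp

lemma one_minus_pow_lower:
  fixes s :: complex
  assumes "norm s \<le> r" "r < 1" "0 < p"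
  shows "1 - r \<le> norm (1 - s ^ p)"
proof -
  have "norm (s ^ p) = norm s ^ p" by (simp add: norm_power)
  also have "\<dots> \<le> norm s ^ 1" using power_decreasing[of 1 p "norm s"] assms by auto
  finally have "norm (s ^ p) \<le> r" using assms by simp
  moreover have "1 - norm (s ^ p) \<le> norm (1 - s ^ p)"
    using norm_triangle_ineq2[of 1 "s ^ p"] by simp
  ultimately show ?thesis by simp
qed

lemma one_minus_pow_upper:
  fixes s :: complex
  assumes "norm s \<le> r" "r < 1"
  shows "norm (1 - s ^ p) \<le> 2"
proof -
  have "norm (s ^ p) \<le> 1" using assms by (simp add: norm_power power_le_one)
  thus ?thesis using norm_triangle_ineq4[of 1 "s ^ p"] by simp
qed

lemma inv_bound:
  fixes s :: complex
  assumes "norm s \<le> r" "r < 1" "0 < p"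
  shows "norm (s ^ i0 / (1 - s ^ p)) \<le> 1 / (1 - r)"
proof -
  have l: "1 - r \<le> norm (1 - s ^ p)" by (rule one_minus_pow_lower[OF assms])
  have "norm (s ^ i0) \<le> 1" using assms by (simp add: norm_power power_le_one)
  hence "norm (s ^ i0 / (1 - s ^ p)) \<le> 1 / norm (1 - s ^ p)"
    using l assms by (simp add: norm_divide divide_right_mono)
  also have "\<dots> \<le> 1 / (1 - r)" using l assms by (simp add: frac_le)
  finally show ?thesis .
qed

lemma est4:
  fixes A B C D A' B' C' D' :: complex
  assumes "norm (A - A') \<le> e" "norm (B - B') \<le> e" "norm (C - C') \<le> e" "norm (D - D') \<le> e"
    "norm B \<le> K" "norm A' \<le> K" "norm D \<le> K" "norm C' \<le> K"
  shows "norm ((A * B - C * D) - (A' * B' - C' * D')) \<le> 4 * K * e"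
proof -
  have eq: "(A * B - C * D) - (A' * B' - C' * D') = (A - A') * B + A' * (B - B') - ((C - C') * D + C' * (D - D'))"
    by (simp add: algebra_simps)
  have e0: "0 \<le> e" using assms(1) norm_ge_zero order_trans by blast
  have K0: "0 \<le> K" using assms(5) norm_ge_zero order_trans by blast
  have h1: "norm ((A - A') * B) \<le> e * K" unfolding norm_mult using assms e0 by (intro mult_mono) auto
  have h2: "norm (A' * (B - B')) \<le> K * e" unfolding norm_mult using assms K0 by (intro mult_mono) auto
  have h3: "norm ((C - C') * D) \<le> e * K" unfolding norm_mult using assms e0 by (intro mult_mono) auto
  have h4: "norm (C' * (D - D')) \<le> K * e" unfolding norm_mult using assms K0 by (intro mult_mono) auto
  have "norm ((A - A') * B + A' * (B - B') - ((C - C') * D + C' * (D - D')))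
      \<le> norm ((A - A') * B + A' * (B - B')) + norm ((C - C') * D + C' * (D - D'))"
    by (rule norm_triangle_ineq4)
  also have "\<dots> \<le> (norm ((A - A') * B) + norm (A' * (B - B'))) + (norm ((C - C') * D) + norm (C' * (D - D')))"
    by (intro add_mono norm_triangle_ineq)
  also have "\<dots> \<le> (e * K + K * e) + (e * K + K * e)"
    using h1 h2 h3 h4 by (intro add_mono) auto
  also have "\<dots> = 4 * K * e" by simp
  finally show ?thesis unfolding eq .
qed



lemma hh_le: "hh T u \<le> length u"
  unfolding hh_def by (rule Least_le) (auto simp: adm_words_def)

lemma poly_rw0:
  fixes t :: complex
  assumes "t \<noteq> 0"
  shows "(\<Sum>i\<in>{0..d}. (if c i then 1 else 0) * t ^ (d - i)) = t ^ d * Sf c d (1 / t)"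
  unfolding Sf_def cf_def sum_distrib_left
proof (rule sum.cong)
  fix i assume "i \<in> {0..d}"
  hence "t ^ (d - i) = t ^ d * (1 / t) ^ i" using assms by (simp add: power_diff power_one_over field_simps)
  thus "(if c i then 1 else 0) * t ^ (d - i) = t ^ d * ((if c i then 1 else 0) * (1 / t) ^ i)" by simp
qed simp

lemma poly_rw1:
  fixes t :: complex
  assumes "t \<noteq> 0"
  shows "(\<Sum>i\<in>{1..d}. (if c i then 1 else 0) * t ^ (d - i)) = t ^ d * Sf (\<lambda>i. 1 \<le> i \<and> c i) d (1 / t)"
proof -
  have "(\<Sum>i\<in>{0..d}. (if 1 \<le> i \<and> c i then 1 else 0) * t ^ (d - i))
      = (\<Sum>i\<in>{1..d}. (if c i then 1 else 0) * t ^ (d - i))"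
  proof (cases d)
    case 0 thus ?thesis by simp
  next
    case (Suc d')
    have "(\<Sum>i\<in>{0..d}. (if 1 \<le> i \<and> c i then 1 else 0) * t ^ (d - i))
       = (if 1 \<le> (0::nat) \<and> c 0 then 1 else 0) * t ^ (d - 0) + (\<Sum>i\<in>{Suc 0..d}. (if 1 \<le> i \<and> c i then 1 else 0) * t ^ (d - i))"
      by (rule sum.atLeast_Suc_atMost) simp
    also have "\<dots> = (\<Sum>i\<in>{1..d}. (if c i then 1 else 0) * t ^ (d - i))"
      by (simp only: One_nat_def[symmetric]) (auto intro!: sum.cong)
    finally show ?thesis .
  qed
  thus ?thesis using poly_rw0[OF assms, of "\<lambda>i. 1 \<le> i \<and> c i" d] by simp
qed

lemma cube_aux: "(u::real) \<noteq> 0 \<Longrightarrow> 8 * (u ^ 3 / 64) / u ^ 2 = u / 8"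
  by (simp add: power2_eq_square power3_eq_cube field_simps)

lemma final_est:
  fixes A B C D A' B' C' D' :: complex
  assumes "norm (A - A') \<le> e" "norm (B - B') \<le> e" "norm (C - C') \<le> e" "norm (D - D') \<le> e"
    "norm B \<le> K" "norm A' \<le> K" "norm D \<le> K" "norm C' \<le> K"
    "norm (A' * B' - C' * D') \<ge> (1 - r) / 4"
    "e = 2 * r ^ M / (1 - r)" "K = 1 / (1 - r)" "r ^ M < (1 - r) ^ 3 / 64" "0 < r" "r < 1"
  shows "norm (A * B - C * D) \<ge> (1 - r) / 8"
proof -
  have d: "norm ((A * B - C * D) - (A' * B' - C' * D')) \<le> 4 * K * e" using assms(1-8) by (rule est4)
  have "4 * K * e = 8 * r ^ M / (1 - r) ^ 2" unfolding assms(10,11) using assms(14) by (simp add: power2_eq_square)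
  also have "\<dots> < 8 * ((1 - r) ^ 3 / 64) / (1 - r) ^ 2"
    using assms by (intro divide_strict_right_mono mult_strict_left_mono) auto
  also have "\<dots> = (1 - r) / 8" using assms(14) by (intro cube_aux) simp
  finally have "norm ((A * B - C * D) - (A' * B' - C' * D')) < (1 - r) / 8" using d by simp
  moreover have "norm (A' * B' - C' * D') \<le> norm (A * B - C * D) + norm ((A * B - C * D) - (A' * B' - C' * D'))"
    using norm_triangle_ineq[of "A * B - C * D" "(A' * B' - C' * D') - (A * B - C * D)"]
      norm_minus_commute[of "A * B - C * D" "A' * B' - C' * D'"] by simp
  ultimately show ?thesis using assms(9) by linarith
qed

lemma lb_a:
  fixes s :: complex
  assumes "norm s \<le> r" "r < 1" "0 < r" "0 < p" "0 < q"
  shows "norm (1 / (1 - s ^ p) * (1 / (1 - s ^ q)) - 0 * D) \<ge> (1 - r) / 4"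
proof -
  have a: "norm (1 - s ^ p) \<le> 2" "norm (1 - s ^ q) \<le> 2" using one_minus_pow_upper assms by blast+
  have b: "1 - r \<le> norm (1 - s ^ p)" "1 - r \<le> norm (1 - s ^ q)" using one_minus_pow_lower assms by blast+
  have "0 < norm (1 - s ^ p) * norm (1 - s ^ q)" using b assms by (intro mult_pos_pos) linarith+
  moreover have "norm (1 - s ^ p) * norm (1 - s ^ q) \<le> 2 * 2" using a by (intro mult_mono) auto
  ultimately have "1 / 4 \<le> 1 / (norm (1 - s ^ p) * norm (1 - s ^ q))" by (simp add: frac_le)
  thus ?thesis using assms by (simp add: norm_divide norm_mult)
qed

lemma frac_aux: "(x::complex) \<noteq> 0 \<Longrightarrow> 1 / x * (1 / x) - a / x * (b / x) = (1 - a * b) / (x * x)"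
  by (simp add: diff_divide_distrib)

lemma lb_b:
  fixes s :: complex
  assumes "norm s \<le> r" "r < 1" "0 < r" "0 < p" "0 < i0 + j0"
  shows "norm (1 / (1 - s ^ p) * (1 / (1 - s ^ p)) - s ^ j0 / (1 - s ^ p) * (s ^ i0 / (1 - s ^ p))) \<ge> (1 - r) / 4"
proof -
  have a: "norm (1 - s ^ p) \<le> 2" by (rule one_minus_pow_upper[OF assms(1,2)])
  have b: "1 - r \<le> norm (1 - s ^ p)" by (rule one_minus_pow_lower[OF assms(1,2,4)])
  have c: "1 - r \<le> norm (1 - s ^ (i0 + j0))" by (rule one_minus_pow_lower[OF assms(1,2,5)])
  have nz: "1 - s ^ p \<noteq> 0" using b assms by auto
  have eq: "1 / (1 - s ^ p) * (1 / (1 - s ^ p)) - s ^ j0 / (1 - s ^ p) * (s ^ i0 / (1 - s ^ p))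
      = (1 - s ^ (i0 + j0)) / ((1 - s ^ p) * (1 - s ^ p))"
    using frac_aux[OF nz, of "s ^ j0" "s ^ i0"] by (simp add: power_add mult.commute)
  have "0 < norm (1 - s ^ p) * norm (1 - s ^ p)" using nz by simp
  moreover have "norm (1 - s ^ p) * norm (1 - s ^ p) \<le> 2 * 2" using a by (intro mult_mono) auto
  ultimately have "(1 - r) / 4 \<le> (1 - r) / (norm (1 - s ^ p) * norm (1 - s ^ p))"
    using assms by (intro divide_left_mono) auto
  also have "\<dots> \<le> norm (1 - s ^ (i0 + j0)) / (norm (1 - s ^ p) * norm (1 - s ^ p))"
    using c \<open>0 < norm (1 - s ^ p) * norm (1 - s ^ p)\<close> by (intro divide_right_mono) auto
  finally show ?thesis unfolding eq by (simp add: norm_divide norm_mult)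
qed

lemma least_per_pos:
  assumes "0 < length w"
  shows "0 < (LEAST p. 0 < p \<and> per w p)"
  using LeastI_ex[of "\<lambda>p. 0 < p \<and> per w p"] assms per_len by blast

lemma coef_per:
  assumes "length w = n" "2 * M \<le> n" "i < M"
  shows "corr w w i = ((LEAST p. 0 < p \<and> per w p) dvd i)"
  using corr_ov[of w w i] per_ov[of w i] per_char[of M w i "LEAST p. 0 < p \<and> per w p"] assms by simp

theorem proposition4p3:
  fixes T :: "'a::finite \<Rightarrow> 'a \<Rightarrow> bool" and \<rho> :: real
  assumes "irreducible01 T" and "\<rho> > 1"
  shows "\<exists>D0 > 0. \<exists>N :: nat. \<forall>k \<ge> 1. \<forall>w1 w2.
           w1 \<in> adm_words T (k + 1) \<longrightarrow> w2 \<in> adm_words T (k + 1) \<longrightarrow>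
           d1 T w1 \<ge> N \<longrightarrow> d2 T w1 w2 \<ge> N \<longrightarrow>
           (\<forall>t :: complex. cmod t \<ge> \<rho> \<longrightarrow>
              cmod (p11 T w1 w2 t * p22 T w1 w2 t - p12 T w1 w2 t * p21 T w1 w2 t)
                \<ge> D0 * cmod t ^ (d1 T w1 + d2 T w1 w2))"
proof -
  define r where "r = 1 / \<rho>"
  have r0: "0 < r" and r1: "r < 1" using assms(2) by (auto simp: r_def)
  obtain M0 where M0: "r ^ M0 < (1 - r) ^ 3 / 64"
    using real_arch_pow_inv[of "(1 - r) ^ 3 / 64" r] r1 by auto
  define M where "M = Suc M0"
  have "r ^ M \<le> r ^ M0" unfolding M_def using r0 r1 by (intro power_decreasing) auto
  hence Mr: "r ^ M < (1 - r) ^ 3 / 64" using M0 by simp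
  define e where "e = 2 * r ^ M / (1 - r)"
  define K where "K = 1 / (1 - r)"
  have e0: "0 \<le> e" unfolding e_def using r0 r1 by simp
  show ?thesis
  proof (intro exI[of _ "(1 - r) / 8"] conjI exI[of _ "8 * M"] allI impI)
    show "0 < (1 - r) / 8" using r1 by simp
  next
    fix k :: nat and w1 w2 :: "'a list" and t :: complex
    assume k: "1 \<le> k" and w1: "w1 \<in> adm_words T (k + 1)" and w2: "w2 \<in> adm_words T (k + 1)"
      and hd1: "8 * M \<le> d1 T w1" and hd2: "8 * M \<le> d2 T w1 w2" and ht: "\<rho> \<le> cmod t"
    define n where "n = k + 1"
    have len1: "length w1 = n" and len2: "length w2 = n" using w1 w2 by (auto simp: adm_words_def n_def)
    define da where "da = d1 T w1"
    define db where "db = d2 T w1 w2"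
    have "da \<le> k" unfolding da_def d1_def using hh_le[of T "tl w1"] len1 n_def by simp
    hence nM: "8 * M \<le> n" using hd1 da_def n_def by simp
    have daM: "M \<le> da" using hd1 da_def by simp
    have dbM: "M \<le> db" using hd2 db_def by simp
    have tnz: "t \<noteq> 0" using ht assms(2) by auto
    define s where "s = 1 / t"
    have ns: "norm s \<le> r" unfolding s_def r_def using ht assms(2)
      by (simp add: norm_divide frac_le)
    have ns1: "norm s < 1" using ns r1 by simp
    define A where "A = Sf (\<lambda>i. corr w1 w1 i) da s"
    define B where "B = Sf (\<lambda>i. corr w2 w2 i) db s"
    define C where "C = Sf (\<lambda>i. 1 \<le> i \<and> corr w1 w2 i) db s"
    define D where "D = Sf (\<lambda>i. 1 \<le> i \<and> corr w2 w1 i) da s"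
    have e11: "p11 T w1 w2 t = t ^ da * A"
      unfolding p11_def A_def s_def da_def by (rule poly_rw0[OF tnz])
    have e22: "p22 T w1 w2 t = t ^ db * B"
      unfolding p22_def B_def s_def db_def by (rule poly_rw0[OF tnz])
    have e12: "p12 T w1 w2 t = t ^ db * C"
      unfolding p12_def C_def s_def db_def by (rule poly_rw1[OF tnz])
    have e21: "p21 T w1 w2 t = t ^ da * D"
      unfolding p21_def D_def s_def da_def by (rule poly_rw1[OF tnz])
    have eq: "p11 T w1 w2 t * p22 T w1 w2 t - p12 T w1 w2 t * p21 T w1 w2 t = t ^ (da + db) * (A * B - C * D)"
      unfolding e11 e22 e12 e21 by (simp add: power_add algebra_simps)
    define p1 where "p1 = (LEAST p. 0 < p \<and> per w1 p)"
    define p2 where "p2 = (LEAST p. 0 < p \<and> per w2 p)"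
    have p1pos: "0 < p1" unfolding p1_def using least_per_pos[of w1] len1 n_def by simp
    have p2pos: "0 < p2" unfolding p2_def using least_per_pos[of w2] len2 n_def by simp
    define A' where "A' = 1 / (1 - s ^ p1)"
    define B' where "B' = 1 / (1 - s ^ p2)"
    have nM2: "2 * M \<le> n" using nM by simp
    have cA: "\<forall>i<M. corr w1 w1 i = (p1 dvd i)" using coef_per[OF len1 nM2] p1_def by simp
    have cB: "\<forall>i<M. corr w2 w2 i = (p2 dvd i)" using coef_per[OF len2 nM2] p2_def by simp
    have dA: "norm (A - A') \<le> e"
      using approx[OF ns r1 cA daM] Si_dvd[OF p1pos ns1] unfolding A_def A'_def e_def by simp
    have dB: "norm (B - B') \<le> e"
      using approx[OF ns r1 cB dbM] Si_dvd[OF p2pos ns1] unfolding B_def B'_def e_def by simp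
    have bA': "norm A' \<le> K" using inv_bound[OF ns r1 p1pos, of 0] unfolding A'_def K_def by simp
    have bB': "norm B' \<le> K" using inv_bound[OF ns r1 p2pos, of 0] unfolding B'_def K_def by simp
    have bB: "norm B \<le> K" unfolding B_def K_def by (rule Sf_bound[OF ns r1])
    have bC: "norm C \<le> K" unfolding C_def K_def by (rule Sf_bound[OF ns r1])
    have bD: "norm D \<le> K" unfolding D_def K_def by (rule Sf_bound[OF ns r1])
    have corr12: "\<And>i. corr w1 w2 i = ov w1 w2 i" using corr_ov[of w1 w2] len1 len2 by simp
    have corr21: "\<And>i. corr w2 w1 i = ov w2 w1 i" using corr_ov[of w2 w1] len1 len2 by simp
    have key: "(1 - r) / 8 \<le> norm (A * B - C * D)"
    proof (cases "(\<exists>ia. 1 \<le> ia \<and> ia < M \<and> ov w2 w1 ia) \<and> (\<exists>ja. 1 \<le> ja \<and> ja < M \<and> ov w1 w2 ja)")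
      case True
      then obtain ia ja where ia: "1 \<le> ia" "ia < M" "ov w2 w1 ia" and ja: "1 \<le> ja" "ja < M" "ov w1 w2 ja"
        by blast
      define i0 where "i0 = (LEAST i. 1 \<le> i \<and> ov w2 w1 i)"
      define j0 where "j0 = (LEAST j. 1 \<le> j \<and> ov w1 w2 j)"
      note cs1 = cross_struct[OF len1 len2 nM i0_def ia j0_def ja p1_def p2_def]
      note cs2 = cross_struct[OF len2 len1 nM j0_def ja i0_def ia p2_def p1_def]
      have pe: "p2 = p1" using cs1(1) by simp
      have cD: "\<forall>i<M. (1 \<le> i \<and> corr w2 w1 i) = (i0 \<le> i \<and> p1 dvd (i - i0))"
        using cs1(6) corr21 by simp
      have cC: "\<forall>i<M. (1 \<le> i \<and> corr w1 w2 i) = (j0 \<le> i \<and> p1 dvd (i - j0))"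
        using cs2(6) corr12 pe by simp
      define C' where "C' = s ^ j0 / (1 - s ^ p1)"
      define D' where "D' = s ^ i0 / (1 - s ^ p1)"
      have dC: "norm (C - C') \<le> e"
        using approx[OF ns r1 cC dbM] Si_shift[OF p1pos ns1, of j0] unfolding C_def C'_def e_def by simp
      have dD: "norm (D - D') \<le> e"
        using approx[OF ns r1 cD daM] Si_shift[OF p1pos ns1, of i0] unfolding D_def D'_def e_def by simp
      have bC': "norm C' \<le> K" using inv_bound[OF ns r1 p1pos, of j0] unfolding C'_def K_def by simp
      have lb: "norm (A' * B' - C' * D') \<ge> (1 - r) / 4"
        using lb_b[OF ns r1 r0 p1pos, of i0 j0] cs1(3) unfolding A'_def B'_def C'_def D'_def pe by simp
      show ?thesis
        by (rule final_est[OF dA dB dC dD bB bA' bD bC' lb e_def K_def Mr r0 r1])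
    next
      case False
      hence "(\<not> (\<exists>ia. 1 \<le> ia \<and> ia < M \<and> ov w2 w1 ia)) \<or> \<not> (\<exists>ja. 1 \<le> ja \<and> ja < M \<and> ov w1 w2 ja)"
        by blast
      thus ?thesis
      proof
        assume h: "\<not> (\<exists>ia. 1 \<le> ia \<and> ia < M \<and> ov w2 w1 ia)"
        have cD: "\<forall>i<M. (1 \<le> i \<and> corr w2 w1 i) = False" using h corr21 by auto
        have dD: "norm (D - 0) \<le> e"
          using approx[OF ns r1 cD daM] Si_False[of s] unfolding D_def e_def by simp
        have dC: "norm (C - C) \<le> e" using e0 by simp
        have lb: "norm (A' * B' - C * 0) \<ge> (1 - r) / 4"
          using lb_a[OF ns r1 r0 p1pos p2pos, of D] unfolding A'_def B'_def by simp
        show ?thesis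
          by (rule final_est[OF dA dB dC dD bB bA' bD bC lb e_def K_def Mr r0 r1])
      next
        assume h: "\<not> (\<exists>ja. 1 \<le> ja \<and> ja < M \<and> ov w1 w2 ja)"
        have cC: "\<forall>i<M. (1 \<le> i \<and> corr w1 w2 i) = False" using h corr12 by auto
        have dC: "norm (C - 0) \<le> e"
          using approx[OF ns r1 cC dbM] Si_False[of s] unfolding C_def e_def by simp
        have dD: "norm (D - D) \<le> e" using e0 by simp
        have b0: "norm (0::complex) \<le> K" unfolding K_def using r1 by simp
        have lb: "norm (A' * B' - 0 * D) \<ge> (1 - r) / 4"
          using lb_a[OF ns r1 r0 p1pos p2pos, of D] unfolding A'_def B'_def by simp
        show ?thesis
          by (rule final_est[OF dA dB dC dD bB bA' bD b0 lb e_def K_def Mr r0 r1])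
      qed
    qed
    have "cmod (p11 T w1 w2 t * p22 T w1 w2 t - p12 T w1 w2 t * p21 T w1 w2 t)
        = cmod t ^ (da + db) * norm (A * B - C * D)" unfolding eq by (simp add: norm_mult norm_power)
    moreover have "(1 - r) / 8 * cmod t ^ (da + db) \<le> cmod t ^ (da + db) * norm (A * B - C * D)"
      using mult_right_mono[OF key, of "cmod t ^ (da + db)"] by (simp add: mult.commute)
    ultimately show "(1 - r) / 8 * cmod t ^ (d1 T w1 + d2 T w1 w2)
        \<le> cmod (p11 T w1 w2 t * p22 T w1 w2 t - p12 T w1 w2 t * p21 T w1 w2 t)"
      unfolding da_def db_def by simp
  qed
qed

end
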